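(* Let $n\ge 2$ and let $\mathcal{P}_E(SD_{8n})$ be the enhanced power graph of the semidihedral group $SD_{8n}$. Put $\alpha=8n-1$, $\beta=6n-1$, $\gamma=4n-1$, and let $Q$ be the $(n+4)\times(n+4)$ matrix with rows and columns indexed by $1,\dots,n+4$ given by: row $1$: $Q_{11}=0$, $Q_{12}=\sqrt{\alpha^2+\beta^2}$, $Q_{13}=(4n-2)\sqrt{\alpha^2+\gamma^2}$, $Q_{1j}=2\sqrt{\alpha^2+9}$ for $4\le j\le n+3$, $Q_{1,n+4}=2n\sqrt{\alpha^2+1}$; row $2$: $Q_{21}=\sqrt{\alpha^2+\beta^2}$, $Q_{22}=0$, $Q_{23}=(4n-2)\sqrt{\beta^2+\gamma^2}$, $Q_{2j}=2\sqrt{\beta^2+9}$ for $4\le j\le n+3$, $Q_{2,n+4}=0$; row $3$: $Q_{31}=\sqrt{\alpha^2+\gamma^2}$, $Q_{32}=\sqrt{\beta^2+\gamma^2}$, $Q_{33}=(4n-3)(4n-1)\sqrt2$, all other entries $0$; row $i$ for $4\le i\le n+3$: $Q_{i1}=\sqrt{\alpha^2+9}$, $Q_{i2}=\sqrt{\beta^2+9}$, $Q_{ii}=3\sqrt2$, all other entries $0$; row $n+4$: $Q_{n+4,1}=\sqrt{\alpha^2+1}$, all other entries $0$. Then the Sombor spectrum of $\mathcal{P}_E(SD_{8n})$ consists of $-(4n-1)\sqrt2$ with multiplicity $4n-3$, $0$ with multiplicity $2n-1$, $-3\sqrt2$ with multiplicity $n$, together with the eigenvalues (with multiplicity) of $Q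$.
   Context: For a finite simple graph $\Gamma$ with vertices $u_1,\dots,u_N$, the Sombor matrix $S(\Gamma)$ has $(i,j)$ entry $\sqrt{\deg(u_i)^2+\deg(u_j)^2}$ if $u_i,u_j$ are adjacent and $0$ otherwise; the Sombor spectrum is the multiset of its eigenvalues. $SD_{8n}=\langle a,b: a^{4n}=b^2=e,\ ba=a^{2n-1}b\rangle$ of order $8n$. The enhanced power graph $\mathcal{P}_E(G)$ of a group $G$ has vertex set $G$, two distinct vertices being adjacent iff both belong to a common cyclic subgroup of $G$. *)

theory Defs
  imports "HOL-Algebra.Generated_Groups" "Jordan_Normal_Form.Char_Poly"
    "HOL-Computational_Algebra.Fundamental_Theorem_Algebra"
begin

text \<open>Semidihedral group SD_{8n} = < a, b | a^{4n} = b^2 = e, b a = a^{2n-1} b >,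
  realised concretely: the pair (i, j) with i < 4n, j < 2 stands for a^i b^j.
  Since b a^k = a^{k(2n-1)} b, we get (a^i b^j)(a^k b^l) = a^{i + k (2n-1)^j} b^{j+l}.\<close>
definition SD :: "nat \<Rightarrow> (nat \<times> nat) monoid" where
  "SD n = \<lparr> carrier = {0..<4*n} \<times> {0..<2},
            monoid.mult = (\<lambda>(i,j) (k,l). ((i + k * (2*n - 1)^j) mod (4*n), (j + l) mod 2)),
            one = (0, 0) \<rparr>"

definition enhanced_power_adj :: "('a, 'b) monoid_scheme \<Rightarrow> 'a \<Rightarrow> 'a \<Rightarrow> bool" where
  "enhanced_power_adj G x y \<longleftrightarrow> x \<in> carrier G \<and> y \<in> carrier G \<and> x \<noteq> y \<and>
     (\<exists>z \<in> carrier G. x \<in> generate G {z} \<and> y \<in> generate G {z})"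

definition graph_deg :: "'a set \<Rightarrow> ('a \<Rightarrow> 'a \<Rightarrow> bool) \<Rightarrow> 'a \<Rightarrow> nat" where
  "graph_deg V E x = card {y \<in> V. E x y}"

definition sombor_matrix :: "'a list \<Rightarrow> ('a \<Rightarrow> 'a \<Rightarrow> bool) \<Rightarrow> real mat" where
  "sombor_matrix vs E = mat (length vs) (length vs) (\<lambda>(i,j).
     if E (vs ! i) (vs ! j)
     then sqrt (real (graph_deg (set vs) E (vs ! i))^2 + real (graph_deg (set vs) E (vs ! j))^2)
     else 0)"

definition spectrum_mset :: "real mat \<Rightarrow> complex multiset" where
  "spectrum_mset A = proots (char_poly (map_mat complex_of_real A))"

text \<open>The (n+4) x (n+4) matrix Q of the paper, with rows/columns 1..n+4 shifted to 0..n+3.\<close>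
definition Qmat :: "nat \<Rightarrow> real mat" where
  "Qmat n = (let \<alpha> = real (8*n - 1); \<beta> = real (6*n - 1); \<gamma> = real (4*n - 1) in
    mat (n+4) (n+4) (\<lambda>(i,j).
      if i = 0 then
        (if j = 0 then 0
         else if j = 1 then sqrt (\<alpha>^2 + \<beta>^2)
         else if j = 2 then (4*real n - 2) * sqrt (\<alpha>^2 + \<gamma>^2)
         else if 3 \<le> j \<and> j \<le> n+2 then 2 * sqrt (\<alpha>^2 + 9)
         else 2 * real n * sqrt (\<alpha>^2 + 1))
      else if i = 1 then
        (if j = 0 then sqrt (\<alpha>^2 + \<beta>^2)
         else if j = 1 then 0
         else if j = 2 then (4*real n - 2) * sqrt (\<beta>^2 + \<gamma>^2)
         else if 3 \<le> j \<and> j \<le> n+2 then 2 * sqrt (\<beta>^2 + 9)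
         else 0)
      else if i = 2 then
        (if j = 0 then sqrt (\<alpha>^2 + \<gamma>^2)
         else if j = 1 then sqrt (\<beta>^2 + \<gamma>^2)
         else if j = 2 then (4*real n - 3) * (4*real n - 1) * sqrt 2
         else 0)
      else if 3 \<le> i \<and> i \<le> n+2 then
        (if j = 0 then sqrt (\<alpha>^2 + 9)
         else if j = 1 then sqrt (\<beta>^2 + 9)
         else if j = i then 3 * sqrt 2
         else 0)
      else
        (if j = 0 then sqrt (\<alpha>^2 + 1) else 0)))"

end

theory Submission
  imports Defs "HOL-Algebra.Multiplicative_Group"
begin


lemma sum_vs:
  assumes "distinct vs"
  shows "(\<Sum>k<length vs. g (vs ! k)) = (\<Sum>v\<in>set vs. g v)"
proof -
  have "(\<Sum>v\<in>set vs. g v) = sum_list (map g vs)" using assms by (simp add: sum.distinct_set_conv_list)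
  also have "\<dots> = (\<Sum>k<length vs. g (vs ! k))"
    by (simp add: sum_list_sum_nth atLeast0LessThan)
  finally show ?thesis by simp
qed

lemma char_poly_block0:
  fixes A :: "'a :: idom mat"
  assumes A: "A \<in> carrier_mat n n" and B: "B \<in> carrier_mat n m" and D: "D \<in> carrier_mat m m"
  shows "char_poly (four_block_mat A B (0\<^sub>m m n) D) = char_poly A * char_poly D"
proof -
  have "char_poly_matrix (four_block_mat A B (0\<^sub>m m n) D) =
        four_block_mat (char_poly_matrix A) (map_mat (\<lambda>a. [:-a:]) B) (0\<^sub>m m n) (char_poly_matrix D)"
    using A B D by (intro eq_matI) (auto simp: char_poly_matrix_def)
  thus ?thesis unfolding char_poly_def
    using A B D by (auto intro!: det_four_block_mat_lower_left_zero)
qed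

lemma sum_delta_mult:
  assumes "finite A"
  shows "(\<Sum>v\<in>A. (if v = a then 1 else 0) * (h v :: 'b :: field)) = (if a \<in> A then h a else 0)"
  using assms by (simp add: if_distrib[of "\<lambda>x. x * _"] sum.delta' cong: if_cong)

lemma abstract_cp:
  fixes vs :: "'a list" and cell :: "'a \<Rightarrow> nat" and ws :: "nat \<Rightarrow> 'a" and f :: "nat \<Rightarrow> nat \<Rightarrow> 'b :: field"
  assumes dist: "distinct vs" and N: "length vs = N" and KN: "K \<le> N"
    and cellV: "\<And>v. v \<in> set vs \<Longrightarrow> cell v < K"
    and wsV: "\<And>c. c < N \<Longrightarrow> ws c \<in> set vs"
    and wsinj: "inj_on ws {..<N}"
    and cellws: "\<And>c. c < K \<Longrightarrow> cell (ws c) = c"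
  defines "W \<equiv> \<lambda>u v. if u \<noteq> v then f (cell u) (cell v) else 0"
  shows "char_poly (mat N N (\<lambda>(i,j). W (vs!i) (vs!j))) =
     char_poly (mat K K (\<lambda>(c,d). f c d * (of_nat (card {v \<in> set vs. cell v = d}) - (if c = d then 1 else 0))))
     * (\<Prod>c\<leftarrow>[K..<N]. [: f (cell (ws c)) (cell (ws c)), 1 :])"
proof -
  define S where "S = mat N N (\<lambda>(i,j). W (vs!i) (vs!j))"
  define Qc where "Qc = mat K K (\<lambda>(c,d). f c d * (of_nat (card {v \<in> set vs. cell v = d}) - (if c = d then 1 else 0)))"
  define P' where "P' = (\<lambda>v d. if d < K then (if cell v = d then 1 else 0) else (if v = ws d then 1 else 0 :: 'b))"
  define P where "P = mat N N (\<lambda>(i,d). P' (vs!i) d)"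
  define Pi where "Pi = mat N N (\<lambda>(c,i). (if vs!i = ws c then 1 else 0) - (if K \<le> c \<and> vs!i = ws (cell (ws c)) then 1 else (0::'b)))"
  define T where "T = mat N N (\<lambda>(c,d). if d < K then (if c < K then Qc $$ (c,d) else 0)
      else (if c < K then W (ws c) (ws d) else if c = d then - f (cell (ws d)) (cell (ws d)) else 0))"
  have fin: "finite (set vs)" by simp
  have wsinj': "ws c = ws d \<longleftrightarrow> c = d" if "c < N" "d < N" for c d
    using wsinj that by (auto dest: inj_onD)
  have sumV: "(\<Sum>k<N. g (vs ! k)) = (\<Sum>v\<in>set vs. g v)" for g :: "'a \<Rightarrow> 'b"
    using sum_vs[OF dist, of g] N by simp
  have PiP: "Pi * P = 1\<^sub>m N"
  proof (rule eq_matI)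
    fix c d assume c: "c < dim_row (1\<^sub>m N :: 'b mat)" and d: "d < dim_col (1\<^sub>m N :: 'b mat)"
    hence c: "c < N" and d: "d < N" by auto
    have "(Pi * P) $$ (c,d) = (\<Sum>k<N. ((if vs!k = ws c then 1 else 0) - (if K \<le> c \<and> vs!k = ws (cell (ws c)) then 1 else 0)) * P' (vs!k) d)"
      using c d by (simp add: Pi_def P_def scalar_prod_def atLeast0LessThan)
    also have "\<dots> = (\<Sum>v\<in>set vs. ((if v = ws c then 1 else 0) - (if K \<le> c \<and> v = ws (cell (ws c)) then 1 else 0)) * P' v d)"
      by (rule sumV)
    also have "\<dots> = (\<Sum>v\<in>set vs. (if v = ws c then 1 else 0) * P' v d) - (\<Sum>v\<in>set vs. (if K \<le> c \<and> v = ws (cell (ws c)) then 1 else 0) * P' v d)"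
      by (simp add: left_diff_distrib sum_subtractf)
    also have "\<dots> = P' (ws c) d - (if K \<le> c then P' (ws (cell (ws c))) d else 0)"
    proof (cases "K \<le> c")
      case True
      have "cell (ws c) < K" using cellV wsV c by blast
      hence "ws (cell (ws c)) \<in> set vs" using wsV KN by simp
      then show ?thesis using True wsV[OF c] by (simp add: sum_delta_mult[OF fin])
    next
      case False
      then show ?thesis using wsV[OF c] by (simp add: sum_delta_mult[OF fin])
    qed
    also have "\<dots> = 1\<^sub>m N $$ (c,d)"
    proof -
      have cc: "cell (ws c) < K" using cellV wsV c by blast
      show ?thesis
      proof (cases "d < K")
        case True
        then show ?thesis using c d cc cellws[OF cc] cellws by (auto simp: P'_def)
      next
        case False
        have "ws (cell (ws c)) \<noteq> ws d" using wsinj'[of "cell (ws c)" d] cc False d KN by auto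
        then show ?thesis using c d False wsinj' by (auto simp: P'_def)
      qed
    qed
    finally show "(Pi * P) $$ (c,d) = 1\<^sub>m N $$ (c,d)" .
  qed (auto simp: Pi_def P_def)
  have Pc: "P \<in> carrier_mat N N" and Pic: "Pi \<in> carrier_mat N N" and Sc: "S \<in> carrier_mat N N"
    and Tc: "T \<in> carrier_mat N N" by (auto simp: P_def Pi_def S_def T_def)
  have PPi: "P * Pi = 1\<^sub>m N" using mat_mult_left_right_inverse[OF Pic Pc PiP] .
  have SP: "S * P = P * T"
  proof (rule eq_matI)
    fix i d assume i: "i < dim_row (P * T)" and d: "d < dim_col (P * T)"
    hence i: "i < N" and d: "d < N" by (auto simp: P_def T_def)
    define u where "u = vs ! i"
    have uV: "u \<in> set vs" using i N u_def by auto
    have cu: "cell u < K" using cellV uV by blast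
    have "(S * P) $$ (i,d) = (\<Sum>k<N. W u (vs!k) * P' (vs!k) d)"
      using i d by (simp add: S_def P_def scalar_prod_def atLeast0LessThan u_def)
    also have "\<dots> = (\<Sum>v\<in>set vs. W u v * P' v d)" by (rule sumV)
    finally have L: "(S * P) $$ (i,d) = (\<Sum>v\<in>set vs. W u v * P' v d)" .
    have "(P * T) $$ (i,d) = (\<Sum>c<N. P' u c * T $$ (c,d))"
      using i d by (simp add: T_def P_def scalar_prod_def atLeast0LessThan u_def)
    also have "\<dots> = (\<Sum>c<K. P' u c * T $$ (c,d)) + (\<Sum>c\<in>{K..<N}. P' u c * T $$ (c,d))"
    proof -
      have "{..<N} = {..<K} \<union> {K..<N}" using KN by auto
      thus ?thesis by (simp add: sum.union_disjoint ivl_disj_int_one(2))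
    qed
    also have "(\<Sum>c<K. P' u c * T $$ (c,d)) = (\<Sum>c<K. (if c = cell u then 1 else 0) * T $$ (c,d))"
      by (rule sum.cong) (auto simp: P'_def)
    also have "\<dots> = T $$ (cell u, d)" using cu by (simp add: sum_delta_mult)
    also have "(\<Sum>c\<in>{K..<N}. P' u c * T $$ (c,d)) = (if K \<le> d \<and> u = ws d then - f (cell (ws d)) (cell (ws d)) else 0)"
    proof (cases "d < K")
      case True
      then show ?thesis by (auto simp: P'_def T_def intro!: sum.neutral)
    next
      case False
      have "(\<Sum>c\<in>{K..<N}. P' u c * T $$ (c,d)) = (\<Sum>c\<in>{K..<N}. (if c = d then 1 else 0) * (if u = ws d then - f (cell (ws d)) (cell (ws d)) else 0))"
        by (rule sum.cong) (use False d in \<open>auto simp: P'_def T_def\<close>)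
      also have "\<dots> = (if u = ws d then - f (cell (ws d)) (cell (ws d)) else 0)"
        using False d by (simp add: sum_delta_mult)
      finally show ?thesis using False by simp
    qed
    finally have R: "(P * T) $$ (i,d) = T $$ (cell u, d) + (if K \<le> d \<and> u = ws d then - f (cell (ws d)) (cell (ws d)) else 0)" .
    show "(S * P) $$ (i,d) = (P * T) $$ (i,d)"
    proof (cases "d < K")
      case True
      have "(\<Sum>v\<in>set vs. W u v * P' v d) = (\<Sum>v\<in>{v \<in> set vs. cell v = d} - {u}. f (cell u) d)"
        by (rule sum.mono_neutral_cong_right) (use True in \<open>auto simp: W_def P'_def\<close>)
      also have "\<dots> = f (cell u) d * (of_nat (card {v \<in> set vs. cell v = d}) - (if cell u = d then 1 else 0))"
      proof -
        have "card ({v \<in> set vs. cell v = d} - {u}) = card {v \<in> set vs. cell v = d} - (if cell u = d then 1 else 0)"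
          using uV by (simp add: card_Diff_singleton_if)
        moreover have "cell u = d \<Longrightarrow> card {v \<in> set vs. cell v = d} > 0"
          using uV by (auto simp: card_gt_0_iff)
        ultimately show ?thesis by (auto simp: of_nat_diff)
      qed
      moreover have "cell u < N" "d < N" using cu True KN by auto
      ultimately show ?thesis using L R True cu by (simp add: T_def Qc_def)
    next
      case False
      have "(\<Sum>v\<in>set vs. W u v * P' v d) = (\<Sum>v\<in>set vs. (if v = ws d then 1 else 0) * W u v)"
        by (rule sum.cong) (use False in \<open>auto simp: P'_def\<close>)
      also have "\<dots> = W u (ws d)" using wsV[OF d] by (simp add: sum_delta_mult)
      finally have L': "(S * P) $$ (i,d) = W u (ws d)" using L by simp
      have ne: "ws (cell u) \<noteq> ws d" using wsinj'[of "cell u" d] cu False d KN by auto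
      have cwu: "cell (ws (cell u)) = cell u" using cellws cu by blast
      show ?thesis using L' R False cu d ne cwu by (auto simp: T_def W_def)
    qed
  qed (auto simp: S_def P_def T_def)
  have "S = P * T * Pi"
  proof -
    have "S = S * (P * Pi)" using Sc by (simp add: PPi)
    also have "\<dots> = (S * P) * Pi" using Sc Pc Pic by (simp add: assoc_mult_mat)
    finally show ?thesis by (simp add: SP)
  qed
  hence sim: "similar_mat S T"
    using Sc Tc Pc Pic PPi PiP by (intro similar_matI[of S T P Pi N]) auto
  define B where "B = mat K (N-K) (\<lambda>(c,d). W (ws c) (ws (d+K)))"
  define D where "D = mat (N-K) (N-K) (\<lambda>(c,d). if c = d then - f (cell (ws (d+K))) (cell (ws (d+K))) else 0)"
  have TB: "T = four_block_mat Qc B (0\<^sub>m (N-K) K) D"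
    using KN by (intro eq_matI) (auto simp: T_def Qc_def B_def D_def)
  have Qcc: "Qc \<in> carrier_mat K K" and Bc: "B \<in> carrier_mat K (N-K)" and Dc: "D \<in> carrier_mat (N-K) (N-K)"
    by (auto simp: Qc_def B_def D_def)
  have utD: "upper_triangular D" by (auto simp: D_def upper_triangular_def)
  have "char_poly D = (\<Prod>a\<leftarrow>diag_mat D. [:- a, 1:])"
    by (rule char_poly_upper_triangular[OF Dc utD])
  also have "diag_mat D = map (\<lambda>c. - f (cell (ws c)) (cell (ws c))) [K..<N]"
    using KN by (intro nth_equalityI) (auto simp: diag_mat_def D_def add.commute)
  finally have cD: "char_poly D = (\<Prod>c\<leftarrow>[K..<N]. [: f (cell (ws c)) (cell (ws c)), 1 :])"
    by (simp add: o_def)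
  have "char_poly S = char_poly T" by (rule char_poly_similar[OF sim])
  also have "\<dots> = char_poly Qc * char_poly D" unfolding TB by (rule char_poly_block0[OF Qcc Bc Dc])
  finally show ?thesis unfolding S_def Qc_def cD .
qed



lemma sq_mod:
  assumes "n \<ge> 1"
  shows "((2*n-1)*(2*n-1)) mod (4*n) = (1::nat)"
proof -
  obtain k where k: "n = Suc k" using assms by (cases n) auto
  have "(2*n-1)*(2*n-1) = 1 + k*(4*n)" unfolding k by (simp add: algebra_simps)
  moreover have "4*n > (1::nat)" using assms by simp
  moreover have "(1 + k*(4*n)) mod (4*n) = 1 mod (4*n)" by (rule mod_mult_self1)
  ultimately show ?thesis by (simp only: mod_less)
qed

lemma mod_sq_cancel:
  assumes "(m*m) mod N = (1::nat)"
  shows "(x + c*m*m) mod N = (x + c) mod N"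
proof -
  have "(x + c*m*m) mod N = (x + (c * ((m*m) mod N)) mod N) mod N"
    by (metis mod_add_right_eq mod_mult_right_eq mult.assoc)
  also have "\<dots> = (x + c) mod N" using assms by (simp add: mod_add_right_eq)
  finally show ?thesis .
qed

lemma SD_mult: "(i,j) \<otimes>\<^bsub>SD n\<^esub> (k,l) = ((i + k * (2*n - 1)^j) mod (4*n), (j + l) mod 2)"
  by (simp add: SD_def)

lemma SD_one: "\<one>\<^bsub>SD n\<^esub> = (0,0)" by (simp add: SD_def)
lemma SD_carrier: "carrier (SD n) = {0..<4*n} \<times> {0..<2}" by (simp add: SD_def)

lemma SD_group:
  assumes "n \<ge> 1"
  shows "group (SD n)"
proof (rule groupI)
  let ?m = "2*n - 1" and ?N = "4*n"
  have Npos: "?N > 0" using assms by simp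
  have sq: "(?m*?m) mod ?N = 1" using sq_mod[OF assms] .
  show "x \<otimes>\<^bsub>SD n\<^esub> y \<in> carrier (SD n)" if "x \<in> carrier (SD n)" "y \<in> carrier (SD n)" for x y
    using that Npos by (cases x; cases y) (auto simp: SD_mult SD_carrier)
  show "\<one>\<^bsub>SD n\<^esub> \<in> carrier (SD n)" using Npos by (simp add: SD_one SD_carrier)
  show "\<one>\<^bsub>SD n\<^esub> \<otimes>\<^bsub>SD n\<^esub> x = x" if "x \<in> carrier (SD n)" for x
    using that by (cases x) (auto simp: SD_mult SD_one SD_carrier)
  show "(x \<otimes>\<^bsub>SD n\<^esub> y) \<otimes>\<^bsub>SD n\<^esub> z = x \<otimes>\<^bsub>SD n\<^esub> (y \<otimes>\<^bsub>SD n\<^esub> z)"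
    if xyz: "x \<in> carrier (SD n)" "y \<in> carrier (SD n)" "z \<in> carrier (SD n)" for x y z
  proof -
    obtain a j where x: "x = (a,j)" "j < 2" using xyz(1) by (cases x) (auto simp: SD_carrier)
    obtain b l where y: "y = (b,l)" "l < 2" using xyz(2) by (cases y) (auto simp: SD_carrier)
    obtain c p where z: "z = (c,p)" "p < 2" using xyz(3) by (cases z) (auto simp: SD_carrier)
    have j: "j = 0 \<or> j = 1" and l: "l = 0 \<or> l = 1" using x y by auto
    have "((a + b * ?m^j) mod ?N + c * ?m ^ ((j+l) mod 2)) mod ?N = (a + ((b + c * ?m^l) mod ?N) * ?m^j) mod ?N"
    proof -
      have L: "((a + b * ?m^j) mod ?N + c * ?m ^ ((j+l) mod 2)) mod ?N = (a + b * ?m^j + c * ?m ^ ((j+l) mod 2)) mod ?N"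
        by (simp add: mod_add_left_eq)
      have R: "(a + ((b + c * ?m^l) mod ?N) * ?m^j) mod ?N = (a + b * ?m^j + c * ?m^l * ?m^j) mod ?N"
        by (metis (no_types, lifting) add.assoc distrib_right mod_add_right_eq mod_mult_left_eq)
      show ?thesis
      proof (cases "j = 1 \<and> l = 1")
        case True
        then show ?thesis unfolding L R using mod_sq_cancel[OF sq, of "a + b * ?m" c]
          by (simp add: mult.assoc)
      next
        case False
        then show ?thesis unfolding L R using j l by auto
      qed
    qed
    moreover have "((j + l) mod 2 + p) mod 2 = (j + (l + p) mod 2) mod 2" by presburger
    ultimately show ?thesis using x y z by (simp add: SD_mult)
  qed
  show "\<exists>y\<in>carrier (SD n). y \<otimes>\<^bsub>SD n\<^esub> x = \<one>\<^bsub>SD n\<^esub>" if xc: "x \<in> carrier (SD n)" for x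
  proof -
    obtain a j where x: "x = (a,j)" "j < 2" "a < ?N" using xc by (cases x) (auto simp: SD_carrier)
    show ?thesis
    proof (cases "j = 0")
      case True
      show ?thesis
        by (rule bexI[of _ "((?N - a) mod ?N, 0)"]) (use x True Npos in \<open>auto simp: SD_mult SD_one SD_carrier mod_add_left_eq\<close>)
    next
      case False
      hence j: "j = 1" using x by auto
      show ?thesis
      proof (rule bexI[of _ "((?N - (a * ?m) mod ?N) mod ?N, 1)"])
        have "((?N - (a * ?m) mod ?N) mod ?N + a * ?m) mod ?N = ((?N - (a * ?m) mod ?N) + (a * ?m) mod ?N) mod ?N"
          by (simp only: mod_add_left_eq mod_add_right_eq)
        also have "\<dots> = 0" using Npos by simp
        finally show "((?N - (a * ?m) mod ?N) mod ?N, 1) \<otimes>\<^bsub>SD n\<^esub> x = \<one>\<^bsub>SD n\<^esub>"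
          using x j by (simp add: SD_mult SD_one)
      qed (use Npos in \<open>auto simp: SD_carrier\<close>)
    qed
  qed
qed

definition sdpow :: "nat \<Rightarrow> nat \<Rightarrow> nat \<Rightarrow> nat \<Rightarrow> nat \<times> nat" where
  "sdpow n i j k = (if j = 0 then ((k*i) mod (4*n), 0)
     else if even k then (((k div 2)*(2*n)*i) mod (4*n), 0)
     else (((k div 2)*(2*n)*i + i) mod (4*n), 1))"

lemma SD_pow:
  assumes "n \<ge> 1" "j < 2"
  shows "(i,j) [^]\<^bsub>SD n\<^esub> (k::nat) = sdpow n i j k"
proof (induction k)
  case 0
  then show ?case by (simp add: sdpow_def SD_one)
next
  case (Suc k)
  have j: "j = 0 \<or> j = 1" using assms by auto
  have key: "i + i * (2*n - 1) = 2*n*i" using assms(1)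
    by (cases n) (auto simp: algebra_simps)
  show ?case
  proof (cases "j = 0")
    case True
    then show ?thesis using Suc by (simp add: sdpow_def SD_mult mod_add_left_eq mod_add_right_eq algebra_simps)
  next
    case False
    hence j1: "j = 1" using j by simp
    show ?thesis
    proof (cases "even k")
      case True
      then have sk: "Suc k div 2 = k div 2" by presburger
      have "(i,j) [^]\<^bsub>SD n\<^esub> Suc k = sdpow n i j k \<otimes>\<^bsub>SD n\<^esub> (i,j)" using Suc by simp
      also have "\<dots> = (((k div 2)*(2*n)*i) mod (4*n), 0) \<otimes>\<^bsub>SD n\<^esub> (i,1)"
        using True j1 by (simp only: sdpow_def if_True if_False) simp
      also have "\<dots> = ((((k div 2)*(2*n)*i) mod (4*n) + i) mod (4*n), 1)"
        by (simp only: SD_mult) simp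
      also have "\<dots> = ((((k div 2)*(2*n)*i) + i) mod (4*n), 1)"
        by (simp only: mod_add_left_eq)
      finally show ?thesis using True j1 sk by (simp only: sdpow_def) simp
    next
      case False
      then have sk: "Suc k div 2 = k div 2 + 1" by presburger
      have "((k div 2 * (2 * n) * i + i) mod (4 * n) + i * (2 * n - 1)) mod (4 * n)
           = ((k div 2 * (2 * n) * i) + (i + i * (2 * n - 1))) mod (4 * n)"
        by (simp add: mod_add_left_eq add.assoc)
      also have "\<dots> = ((k div 2 + 1) * (2 * n) * i) mod (4*n)" unfolding key
        by (simp add: algebra_simps)
      finally show ?thesis using Suc False j1 sk by (simp add: sdpow_def SD_mult)
    qed
  qed
qed

lemma h2n: "(2*n*x) mod (4*n) = 2*n*(x mod (2::nat))"
proof -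
  have "(2*n*x) mod (2*n*2) = 2*n*(x mod 2)" by (rule mod_mult_mult1)
  thus ?thesis by (simp add: mult.commute mult.left_commute)
qed

lemma mod_lt2: "x < 2*N \<Longrightarrow> x mod N = (if x < N then x else x - (N::nat))"
  by (simp add: le_mod_geq)

lemma SD_generate:
  assumes "n \<ge> 1" "z \<in> carrier (SD n)"
  shows "generate (SD n) {z} = {sdpow n (fst z) (snd z) k | k. True}"
proof -
  interpret group "SD n" using SD_group[OF assms(1)] .
  have fin: "finite (carrier (SD n))" by (simp add: SD_carrier)
  obtain i j where z: "z = (i,j)" "j < 2" using assms(2) by (cases z) (auto simp: SD_carrier)
  show ?thesis using generate_pow_on_finite_carrier[OF fin assms(2)] SD_pow[OF assms(1) z(2)] z
    by auto
qed

definition rr :: "nat \<Rightarrow> nat \<Rightarrow> nat" where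
  "rr n a = (if a < 2*n then a else a - 2*n)"

definition cellf :: "nat \<Rightarrow> nat \<times> nat \<Rightarrow> nat" where
  "cellf n u = (if snd u = 0 then (if fst u = 0 then 0 else if fst u = 2*n then 1 else 2)
     else if odd (fst u) then 3 + rr n (fst u) div 2 else n + 3)"

definition cadj :: "nat \<Rightarrow> nat \<Rightarrow> nat \<Rightarrow> bool" where
  "cadj n c d \<longleftrightarrow> c = 0 \<or> d = 0 \<or> (c \<le> n+2 \<and> d \<le> n+2 \<and> (c = 1 \<or> d = 1 \<or> c = d))"

lemma sp0: "sdpow n i j 0 = (0,0)" by (simp add: sdpow_def)
lemma sp1: "i < 4*n \<Longrightarrow> j < 2 \<Longrightarrow> sdpow n i j 1 = (i,j)"
  by (auto simp: sdpow_def)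
lemma sp2: "odd a \<Longrightarrow> n \<ge> 1 \<Longrightarrow> sdpow n a 1 2 = (2*n,0)"
  using h2n[of n a] by (simp add: sdpow_def mult.commute odd_iff_mod_2_eq_one)
lemma sp3: assumes "odd a" "a < 4*n"
  shows "sdpow n a 1 3 = (if a < 2*n then a + 2*n else a - 2*n, 1)"
proof -
  have "(2*n*a + a) mod (4*n) = ((2*n*a) mod (4*n) + a) mod (4*n)" by (simp only: mod_add_left_eq)
  also have "\<dots> = (2*n*(a mod 2) + a) mod (4*n)" unfolding h2n ..
  also have "\<dots> = (2*n + a) mod (4*n)" using assms(1) by (simp add: odd_iff_mod_2_eq_one)
  also have "\<dots> = (if a < 2*n then a + 2*n else a - 2*n)"
    using mod_lt2[of "2*n+a" "4*n"] assms(2) by auto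
  finally show ?thesis by (simp add: sdpow_def mult.commute mult.left_commute)
qed
lemma spa: "k < 4*n \<Longrightarrow> sdpow n 1 0 k = (k,0)" by (simp add: sdpow_def)

lemma spb: assumes "snd (sdpow n i 1 k) = 0"
  shows "fst (sdpow n i 1 k) = 0 \<or> (odd i \<and> fst (sdpow n i 1 k) = 2*n)"
proof -
  have ek: "even k" using assms by (auto simp: sdpow_def split: if_splits)
  have "fst (sdpow n i 1 k) = (2*n*((k div 2)*i)) mod (4*n)" using ek
    by (simp add: sdpow_def mult.commute mult.left_commute)
  also have "\<dots> = 2*n*(((k div 2)*i) mod 2)" by (rule h2n)
  finally show ?thesis by (auto simp: mod2_eq_if)
qed

lemma spc: assumes "snd (sdpow n i 1 k) = 1" "i < 4*n"
  shows "rr n (fst (sdpow n i 1 k)) = rr n i \<and> (odd (fst (sdpow n i 1 k)) \<longleftrightarrow> odd i)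
     \<and> (even i \<longrightarrow> fst (sdpow n i 1 k) = i) \<and> fst (sdpow n i 1 k) < 4*n"
proof -
  have ok: "odd k" using assms by (auto simp: sdpow_def split: if_splits)
  define e where "e = ((k div 2)*i) mod 2"
  have e01: "e = 0 \<or> e = 1" unfolding e_def by auto
  have ei: "even i \<Longrightarrow> e = 0" unfolding e_def by auto
  have "fst (sdpow n i 1 k) = (2*n*((k div 2)*i) + i) mod (4*n)" using ok
    by (simp add: sdpow_def mult.commute mult.left_commute)
  also have "\<dots> = ((2*n*((k div 2)*i)) mod (4*n) + i) mod (4*n)" by (simp only: mod_add_left_eq)
  also have "\<dots> = (2*n*e + i) mod (4*n)" unfolding e_def h2n ..
  also have "\<dots> = (if 2*n*e + i < 4*n then 2*n*e + i else 2*n*e + i - 4*n)"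
    using mod_lt2[of "2*n*e+i" "4*n"] assms(2) e01 by auto
  finally have F: "fst (sdpow n i 1 k) = (if 2*n*e + i < 4*n then 2*n*e + i else 2*n*e + i - 4*n)" .
  show ?thesis
  proof (cases "e = 0")
    case True
    then show ?thesis using F assms(2) by (simp add: rr_def)
  next
    case False
    hence e1: "e = 1" using e01 by simp
    then have "odd i" using ei by auto
    then show ?thesis using F e1 assms(2) by (auto simp: rr_def)
  qed
qed

lemma sp_snd: "snd (sdpow n i j k) = 0 \<or> snd (sdpow n i j k) = 1"
  by (simp add: sdpow_def)

lemma adj_iff:
  assumes n: "n \<ge> 2"
  shows "enhanced_power_adj (SD n) u v \<longleftrightarrow>
    u \<in> carrier (SD n) \<and> v \<in> carrier (SD n) \<and> u \<noteq> v \<and> cadj n (cellf n u) (cellf n v)"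
proof -
  have n1: "n \<ge> 1" using n by simp
  have gen: "generate (SD n) {z} = {sdpow n (fst z) (snd z) k | k. True}" if "z \<in> carrier (SD n)" for z
    using SD_generate[OF n1 that] .
  show ?thesis
  proof
    assume "enhanced_power_adj (SD n) u v"
    then obtain z where uV: "u \<in> carrier (SD n)" and vV: "v \<in> carrier (SD n)" and uv: "u \<noteq> v"
      and zV: "z \<in> carrier (SD n)" and ug: "u \<in> generate (SD n) {z}" and vg: "v \<in> generate (SD n) {z}"
      unfolding enhanced_power_adj_def by blast
    obtain i j where z: "z = (i,j)" "i < 4*n" "j < 2" using zV by (cases z) (auto simp: SD_carrier)
    obtain k where k: "u = sdpow n i j k" using ug gen[OF zV] z by auto
    obtain l where l: "v = sdpow n i j l" using vg gen[OF zV] z by auto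
    have "cadj n (cellf n u) (cellf n v)"
    proof (cases "j = 0")
      case True
      then show ?thesis using k l by (auto simp: sdpow_def cellf_def cadj_def)
    next
      case False
      hence j1: "j = 1" using z by simp
      have U: "(snd u = 0 \<and> (fst u = 0 \<or> (odd i \<and> fst u = 2*n))) \<or>
          (snd u = 1 \<and> rr n (fst u) = rr n i \<and> (odd (fst u) \<longleftrightarrow> odd i) \<and> (even i \<longrightarrow> fst u = i) \<and> fst u < 4*n)"
        using sp_snd[of n i 1 k] spb[of n i k] spc[of n i k] z(2) k j1 by auto
      have V: "(snd v = 0 \<and> (fst v = 0 \<or> (odd i \<and> fst v = 2*n))) \<or>
          (snd v = 1 \<and> rr n (fst v) = rr n i \<and> (odd (fst v) \<longleftrightarrow> odd i) \<and> (even i \<longrightarrow> fst v = i) \<and> fst v < 4*n)"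
        using sp_snd[of n i 1 l] spb[of n i l] spc[of n i l] z(2) l j1 by auto
      have rrb: "odd a \<Longrightarrow> a < 4*n \<Longrightarrow> rr n a div 2 < n" for a
        unfolding rr_def by presburger
      show ?thesis
      proof (cases "u = (0,0) \<or> v = (0,0)")
        case True
        then show ?thesis by (auto simp: cellf_def cadj_def)
      next
        case False
        show ?thesis
        proof (cases "odd i")
          case True
          have cu: "cellf n u = 1 \<or> cellf n u = 3 + rr n i div 2"
            using U False True by (cases u) (auto simp: cellf_def)
          have cv: "cellf n v = 1 \<or> cellf n v = 3 + rr n i div 2"
            using V False True by (cases v) (auto simp: cellf_def)
          have "rr n i div 2 < n" using rrb True z(2) by blast
          then show ?thesis using cu cv by (auto simp: cadj_def)
        next
          case False': False
          have "u = (i,1)" using U False False' by (cases u) auto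
          moreover have "v = (i,1)" using V False False' by (cases v) auto
          ultimately show ?thesis using uv by simp
        qed
      qed
    qed
    thus "u \<in> carrier (SD n) \<and> v \<in> carrier (SD n) \<and> u \<noteq> v \<and> cadj n (cellf n u) (cellf n v)"
      using uV vV uv by blast
  next
    assume H: "u \<in> carrier (SD n) \<and> v \<in> carrier (SD n) \<and> u \<noteq> v \<and> cadj n (cellf n u) (cellf n v)"
    then have uV: "u \<in> carrier (SD n)" and vV: "v \<in> carrier (SD n)" and uv: "u \<noteq> v"
      and ca: "cadj n (cellf n u) (cellf n v)" by auto
    obtain a b where u: "u = (a,b)" "a < 4*n" "b < 2" using uV by (cases u) (auto simp: SD_carrier)
    obtain c d where v: "v = (c,d)" "c < 4*n" "d < 2" using vV by (cases v) (auto simp: SD_carrier)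
    have "\<exists>z \<in> carrier (SD n). \<exists>k l. u = sdpow n (fst z) (snd z) k \<and> v = sdpow n (fst z) (snd z) l"
    proof -
      have c0: "(1,0) \<in> carrier (SD n)" using n1 by (auto simp: SD_carrier)
      show ?thesis
      proof (cases "cellf n u = 0")
        case True
        hence "u = (0,0)" using u by (auto simp: cellf_def split: if_splits)
        then show ?thesis using v vV sp0[of n c d] sp1[of c n d]
          by (intro bexI[of _ v] exI[of _ 0] exI[of _ 1]) auto
      next
        case cu0: False
        show ?thesis
        proof (cases "cellf n v = 0")
          case True
          hence "v = (0,0)" using v by (auto simp: cellf_def split: if_splits)
          then show ?thesis using u uV sp0[of n a b] sp1[of a n b]
            by (intro bexI[of _ u] exI[of _ 1] exI[of _ 0]) auto
        next
          case cv0: False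
          have ca': "cellf n u \<le> n+2 \<and> cellf n v \<le> n+2 \<and> (cellf n u = 1 \<or> cellf n v = 1 \<or> cellf n u = cellf n v)"
            using ca cu0 cv0 by (auto simp: cadj_def)
          show ?thesis
          proof (cases "b = 0 \<and> d = 0")
            case True
            then show ?thesis using u v c0 spa[of a n] spa[of c n]
              by (intro bexI[of _ "(1,0)"] exI[of _ a] exI[of _ c]) auto
          next
            case False
            have bd: "b = 0 \<or> b = 1" "d = 0 \<or> d = 1" using u v by auto
            have c0: "cellf n (x,0) = (if x = 0 then 0 else if x = 2*n then 1 else 2)" for x
              by (simp add: cellf_def)
            have c1: "cellf n (x,1) = (if odd x then 3 + rr n x div 2 else n+3)" for x
              by (simp add: cellf_def)
            show ?thesis
            proof (cases "b = 0")
              case True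
              hence d1: "d = 1" using False bd by auto
              have cu: "cellf n u = (if a = 0 then 0 else if a = 2*n then 1 else 2)" using u True c0 by simp
              have cv: "cellf n v = (if odd c then 3 + rr n c div 2 else n+3)" using v d1 c1 by simp
              have le2: "cellf n u \<le> 2" unfolding cu by simp
              have ge3: "cellf n v \<ge> 3" unfolding cv by simp
              have cu1: "cellf n u = 1" using ca' le2 ge3 by linarith
              hence "(if a = 0 then 0 else if a = 2*n then 1 else (2::nat)) = 1" using cu by simp
              hence "a = 2*n" by (auto split: if_splits)
              hence ua: "u = (2*n,0)" using u True by simp
              have "odd c"
              proof (rule ccontr)
                assume "\<not> odd c"
                hence "cellf n v = n + 3" using cv by simp
                thus False using ca' by linarith
              qed
              then show ?thesis using v d1 vV sp2[OF \<open>odd c\<close> n1] sp1[of c n 1] ua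
                by (intro bexI[of _ v] exI[of _ 2] exI[of _ 1]) auto
            next
              case b1: False
              hence b1: "b = 1" using bd by auto
              show ?thesis
              proof (cases "d = 0")
                case True
                have cv: "cellf n v = (if c = 0 then 0 else if c = 2*n then 1 else 2)" using v True c0 by simp
                have cu: "cellf n u = (if odd a then 3 + rr n a div 2 else n+3)" using u b1 c1 by simp
                have le2: "cellf n v \<le> 2" unfolding cv by simp
                have ge3: "cellf n u \<ge> 3" unfolding cu by simp
                have cv1: "cellf n v = 1" using ca' le2 ge3 by linarith
                hence "(if c = 0 then 0 else if c = 2*n then 1 else (2::nat)) = 1" using cv by simp
                hence "c = 2*n" by (auto split: if_splits)
                hence va: "v = (2*n,0)" using v True by simp
                have "odd a"
                proof (rule ccontr)
                  assume "\<not> odd a"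
                  hence "cellf n u = n + 3" using cu by simp
                  thus False using ca' by linarith
                qed
                then show ?thesis using u b1 uV sp2[OF \<open>odd a\<close> n1] sp1[of a n 1] va
                  by (intro bexI[of _ u] exI[of _ 1] exI[of _ 2]) auto
              next
                case False
                hence d1: "d = 1" using bd by auto
                have cv: "cellf n v = (if odd c then 3 + rr n c div 2 else n+3)" using v d1 c1 by simp
                have cu: "cellf n u = (if odd a then 3 + rr n a div 2 else n+3)" using u b1 c1 by simp
                have ge3: "cellf n u \<ge> 3" "cellf n v \<ge> 3" unfolding cu cv by simp_all
                have eq: "cellf n u = cellf n v" "cellf n u \<le> n+2" "cellf n v \<le> n+2"
                  using ca' ge3 by linarith+
                have oa: "odd a"
                proof (rule ccontr)
                  assume "\<not> odd a"
                  hence "cellf n u = n + 3" using cu by simp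
                  thus False using eq by linarith
                qed
                have oc: "odd c"
                proof (rule ccontr)
                  assume "\<not> odd c"
                  hence "cellf n v = n + 3" using cv by simp
                  thus False using eq by linarith
                qed
                have "3 + rr n a div 2 = 3 + rr n c div 2" using eq(1) oa oc unfolding cu cv by simp
                hence "rr n a div 2 = rr n c div 2" by simp
                moreover have "odd (rr n a)" "odd (rr n c)" using oa oc unfolding rr_def by presburger+
                ultimately have rre: "rr n a = rr n c" by (metis odd_two_times_div_two_succ)
                have ac: "a \<noteq> c" using u v uv b1 d1 by auto
                have "c = (if a < 2*n then a + 2*n else a - 2*n)"
                  using rre ac u(2) v(2) unfolding rr_def by (simp split: if_splits; linarith)
                then show ?thesis using u v b1 d1 uV sp3[OF oa u(2)] sp1[of a n 1]
                  by (intro bexI[of _ u] exI[of _ 1] exI[of _ 3]) auto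
              qed
            qed
          qed
        qed
      qed
    qed
    then show "enhanced_power_adj (SD n) u v"
      unfolding enhanced_power_adj_def using uV vV uv gen by auto
  qed
qed



definition wsf :: "nat \<Rightarrow> nat \<Rightarrow> nat \<times> nat" where
  "wsf n c = (if c = 0 then (0,0) else if c = 1 then (2*n,0) else if c = 2 then (1,0)
   else if c \<le> n+2 then (2*(c-3)+1, 1) else if c = n+3 then (0,1)
   else if c < 5*n+1 then (if c - (n+4) + 2 < 2*n then c-(n+4)+2 else c-(n+4)+3, 0)
   else if c < 6*n+1 then (2*(c-(5*n+1))+1+2*n, 1)
   else (2*(c-6*n), 1))"

definition idx :: "nat \<Rightarrow> nat \<times> nat \<Rightarrow> nat" where
  "idx n v = (if snd v = 0 then (if fst v = 0 then 0 else if fst v = 2*n then 1 else if fst v = 1 then 2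
       else n+4 + (if fst v < 2*n then fst v - 2 else fst v - 3))
     else if odd (fst v) then (if fst v < 2*n then 3 + fst v div 2 else 5*n+1 + (fst v - 2*n) div 2)
     else (if fst v = 0 then n+3 else 6*n + fst v div 2))"

lemma ws_ranges:
  assumes "n \<ge> 2" "c < 8*n"
  shows "(c = 0 \<and> wsf n c = (0,0)) \<or> (c = 1 \<and> wsf n c = (2*n,0)) \<or> (c = 2 \<and> wsf n c = (1,0))
    \<or> (3 \<le> c \<and> c \<le> n+2 \<and> wsf n c = (2*(c-3)+1, 1)) \<or> (c = n+3 \<and> wsf n c = (0,1))
    \<or> (n+4 \<le> c \<and> c < 5*n+1 \<and> wsf n c = (if c - (n+4) + 2 < 2*n then c-(n+4)+2 else c-(n+4)+3, 0))
    \<or> (5*n+1 \<le> c \<and> c < 6*n+1 \<and> wsf n c = (2*(c-(5*n+1))+1+2*n, 1))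
    \<or> (6*n+1 \<le> c \<and> c < 8*n \<and> wsf n c = (2*(c-6*n), 1))"
  using assms unfolding wsf_def by (auto simp: not_le)

lemma idx_ws: assumes "n \<ge> 2" "c < 8*n" shows "idx n (wsf n c) = c"
  using ws_ranges[OF assms] assms
proof (elim disjE conjE)
qed (auto simp: idx_def; presburger)+

lemma ws_carrier: assumes "n \<ge> 2" "c < 8*n" shows "wsf n c \<in> carrier (SD n)"
  using ws_ranges[OF assms] assms unfolding SD_carrier by (elim disjE conjE) auto

lemma ws_inj: assumes "n \<ge> 2" shows "inj_on (wsf n) {..<8*n}"
  by (rule inj_on_inverseI[of _ "idx n"]) (use idx_ws[OF assms] in auto)

lemma cell_ws_first: assumes "n \<ge> 2" "c < n+4" shows "cellf n (wsf n c) = c"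
proof -
  consider "c = 0" | "c = 1" | "c = 2" | "3 \<le> c \<and> c \<le> n+2" | "c = n+3" using assms by linarith
  then show ?thesis
  proof cases
    case 4
    hence "wsf n c = (2*(c-3)+1, 1)" using assms unfolding wsf_def by auto
    moreover have "2*(c-3)+1 < 2*n" using 4 by linarith
    ultimately show ?thesis using 4 by (auto simp: cellf_def rr_def)
  qed (use assms in \<open>auto simp: cellf_def wsf_def\<close>)
qed

lemma cell_ws_A: assumes "n \<ge> 2" "n+4 \<le> c" "c < 5*n+1" shows "cellf n (wsf n c) = 2"
proof -
  have "wsf n c = (if c - (n+4) + 2 < 2*n then c-(n+4)+2 else c-(n+4)+3, 0)"
    using assms unfolding wsf_def by auto
  then show ?thesis using assms by (auto simp: cellf_def)
qed

lemma cell_ws_P: assumes "n \<ge> 2" "5*n+1 \<le> c" "c < 6*n+1" shows "cellf n (wsf n c) = 3 + (c - (5*n+1))"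
proof -
  have "wsf n c = (2*(c-(5*n+1))+1+2*n, 1)"
    using assms unfolding wsf_def by auto
  then show ?thesis using assms by (auto simp: cellf_def rr_def)
qed

lemma cell_ws_L: assumes "n \<ge> 2" "6*n+1 \<le> c" "c < 8*n" shows "cellf n (wsf n c) = n+3"
proof -
  have "wsf n c = (2*(c-6*n), 1)"
    using assms unfolding wsf_def by auto
  then show ?thesis using assms by (auto simp: cellf_def)
qed

lemma cell_lt: assumes "v \<in> carrier (SD n)" shows "cellf n v < n+4"
proof -
  obtain a b where v: "v = (a,b)" "a < 4*n" "b < 2" using assms by (cases v) (auto simp: SD_carrier)
  show ?thesis using v unfolding cellf_def rr_def by auto presburger?
qed

definition szf :: "nat \<Rightarrow> nat \<Rightarrow> nat" where
  "szf n d = (if d = 0 then 1 else if d = 1 then 1 else if d = 2 then 4*n-2 else if d \<le> n+2 then 2 else 2*n)"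

lemma card_cell:
  assumes n: "n \<ge> 2" and d: "d < n+4"
  shows "card {v \<in> carrier (SD n). cellf n v = d} = szf n d"
proof -
  consider "d = 0" | "d = 1" | "d = 2" | "3 \<le> d \<and> d \<le> n+2" | "d = n+3" using d by linarith
  then show ?thesis
  proof cases
    case 1
    have "{v \<in> carrier (SD n). cellf n v = d} = {(0,0)}"
      using 1 n by (auto simp: SD_carrier cellf_def split: if_splits)
    then show ?thesis using 1 by (simp add: szf_def)
  next
    case 2
    have "{v \<in> carrier (SD n). cellf n v = d} = {(2*n,0)}"
      using 2 n by (auto simp: SD_carrier cellf_def split: if_splits)
    then show ?thesis using 2 by (simp add: szf_def)
  next
    case 3
    have "{v \<in> carrier (SD n). cellf n v = d} = (\<lambda>a. (a,0)) ` ({1..<4*n} - {2*n})"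
      using 3 n by (auto simp: SD_carrier cellf_def split: if_splits)
    moreover have "card ((\<lambda>a. (a::nat,0::nat)) ` ({1..<4*n} - {2*n})) = 4*n-2"
      using n by (subst card_image) (auto simp: inj_on_def)
    ultimately show ?thesis using 3 by (simp add: szf_def)
  next
    case 4
    have "{v \<in> carrier (SD n). cellf n v = d} = {(2*(d-3)+1, 1), (2*(d-3)+1+2*n, 1)}"
    proof (rule Set.set_eqI, rule iffI)
      fix v assume v: "v \<in> {v \<in> carrier (SD n). cellf n v = d}"
      obtain a b where ab: "v = (a,b)" "a < 4*n" "b < 2" using v by (cases v) (auto simp: SD_carrier)
      have b1: "b = 1" and oa: "odd a" and r: "rr n a div 2 = d - 3"
        using v ab 4 by (auto simp: cellf_def split: if_splits)
      have "odd (rr n a)" using oa unfolding rr_def by presburger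
      hence "rr n a = 2*(d-3)+1" using r by presburger
      then show "v \<in> {(2*(d-3)+1, 1), (2*(d-3)+1+2*n, 1)}" using ab b1 unfolding rr_def
        by (auto split: if_splits)
    next
      fix v :: "nat \<times> nat" assume "v \<in> {(2*(d-3)+1, 1), (2*(d-3)+1+2*n, 1)}"
      then show "v \<in> {v \<in> carrier (SD n). cellf n v = d}" using 4
        by (auto simp: SD_carrier cellf_def rr_def)
    qed
    moreover have "card {(2*(d-3)+1, 1::nat), (2*(d-3)+1+2*n, 1)} = 2" using n by simp
    ultimately show ?thesis using 4 by (simp add: szf_def)
  next
    case 5
    have "{v \<in> carrier (SD n). cellf n v = d} = (\<lambda>s. (2*s,1)) ` {..<2*n}"
    proof (rule Set.set_eqI, rule iffI)
      fix v assume v: "v \<in> {v \<in> carrier (SD n). cellf n v = d}"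
      obtain a b where ab: "v = (a,b)" "a < 4*n" "b < 2" using v by (cases v) (auto simp: SD_carrier)
      have "rr n a < 2*n" using ab unfolding rr_def by auto
      hence "rr n a div 2 < n" by auto
      hence b1: "b = 1" and ea: "even a"
        using v ab 5 by (auto simp: cellf_def split: if_splits)
      then show "v \<in> (\<lambda>s. (2*s,1)) ` {..<2*n}" using ab
        by (intro image_eqI[of _ _ "a div 2"]) auto
    next
      fix v :: "nat \<times> nat" assume "v \<in> (\<lambda>s. (2*s,1)) ` {..<2*n}"
      then show "v \<in> {v \<in> carrier (SD n). cellf n v = d}" using 5
        by (auto simp: SD_carrier cellf_def)
    qed
    moreover have "card ((\<lambda>s. (2*s::nat,1::nat)) ` {..<2*n}) = 2*n"
      by (subst card_image) (auto simp: inj_on_def)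
    ultimately show ?thesis using 5 by (simp add: szf_def)
  qed
qed

definition Dgf :: "nat \<Rightarrow> nat \<Rightarrow> nat" where
  "Dgf n c = (if c = 0 then 8*n-1 else if c = 1 then 6*n-1 else if c = 2 then 4*n-1 else if c \<le> n+2 then 3 else 1)"

lemma card_partition:
  assumes "finite S" "\<And>y. y \<in> S \<Longrightarrow> g y < (K::nat)"
  shows "card S = (\<Sum>d<K. card {y \<in> S. g y = d})"
proof -
  have "(\<Sum>d<K. sum (\<lambda>_. 1::nat) {y. y \<in> S \<and> g y = d}) = sum (\<lambda>_. 1) S"
    by (rule sum.group) (use assms in auto)
  thus ?thesis by simp
qed

lemma deg_sum:
  assumes n: "n \<ge> 2" and c: "c < n+4"
  shows "(\<Sum>d<n+4. if cadj n c d then szf n d - (if c = d then 1 else 0) else 0) = Dgf n c"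
proof -
  define h where "h d = (if cadj n c d then szf n d - (if c = d then 1 else 0) else 0)" for d
  have U: "{..<n+4} = insert 0 (insert 1 (insert 2 (insert (n+3) {3..<n+3})))" by auto
  have "(\<Sum>d<n+4. h d) = h 0 + h 1 + h 2 + h (n+3) + (\<Sum>d\<in>{3..<n+3}. h d)"
    unfolding U by (simp add: add.assoc)
  moreover have mid: "(\<Sum>d\<in>{3..<n+3}. h d) = (if c = 0 \<or> c = 1 then 2*n else if 3 \<le> c \<and> c \<le> n+2 then 1 else 0)"
  proof -
    consider "c = 0 \<or> c = 1" | "c = 2 \<or> c = n+3" | "3 \<le> c \<and> c \<le> n+2" using c by linarith
    then show ?thesis
    proof cases
      case 1
      have "(\<Sum>d\<in>{3..<n+3}. h d) = (\<Sum>d\<in>{3..<n+3}. 2)"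
        by (rule sum.cong) (use 1 in \<open>auto simp: h_def cadj_def szf_def\<close>)
      then show ?thesis using 1 by simp
    next
      case 2
      have "(\<Sum>d\<in>{3..<n+3}. h d) = 0"
        by (rule sum.neutral) (use 2 in \<open>auto simp: h_def cadj_def szf_def\<close>)
      then show ?thesis using 2 by auto
    next
      case 3
      have "(\<Sum>d\<in>{3..<n+3}. h d) = (\<Sum>d\<in>{3..<n+3}. if d = c then 1 else 0)"
        by (rule sum.cong) (use 3 in \<open>auto simp: h_def cadj_def szf_def\<close>)
      also have "\<dots> = 1" using 3 by (simp add: sum.delta)
      finally show ?thesis using 3 by simp
    qed
  qed
  ultimately have "(\<Sum>d<n+4. h d) = h 0 + h 1 + h 2 + h (n+3) + (if c = 0 \<or> c = 1 then 2*n else if 3 \<le> c \<and> c \<le> n+2 then 1 else 0)"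
    by simp
  also have "\<dots> = Dgf n c"
    using n c by (auto simp: h_def cadj_def szf_def Dgf_def)
  finally show ?thesis unfolding h_def .
qed

lemma deg_formula:
  assumes n: "n \<ge> 2" and V: "set vs = carrier (SD n)" and u: "u \<in> carrier (SD n)"
  shows "graph_deg (set vs) (enhanced_power_adj (SD n)) u = Dgf n (cellf n u)"
proof -
  let ?V = "carrier (SD n)" and ?c = "cellf n u"
  have fin: "finite ?V" by (simp add: SD_carrier)
  have "graph_deg (set vs) (enhanced_power_adj (SD n)) u = card {y \<in> ?V. y \<noteq> u \<and> cadj n ?c (cellf n y)}"
    unfolding graph_deg_def V using adj_iff[OF n] u by (metis (no_types, lifting))
  also have "\<dots> = (\<Sum>d<n+4. card {y \<in> {y \<in> ?V. y \<noteq> u \<and> cadj n ?c (cellf n y)}. cellf n y = d})"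
    by (rule card_partition) (use fin cell_lt in auto)
  also have "\<dots> = (\<Sum>d<n+4. if cadj n ?c d then szf n d - (if ?c = d then 1 else 0) else 0)"
  proof (rule sum.cong)
    fix d assume d: "d \<in> {..<n+4}"
    show "card {y \<in> {y \<in> ?V. y \<noteq> u \<and> cadj n ?c (cellf n y)}. cellf n y = d} =
      (if cadj n ?c d then szf n d - (if ?c = d then 1 else 0) else 0)"
    proof (cases "cadj n ?c d")
      case True
      have "{y \<in> {y \<in> ?V. y \<noteq> u \<and> cadj n ?c (cellf n y)}. cellf n y = d} = {y \<in> ?V. cellf n y = d} - {u}"
        using True by auto
      moreover have "card ({y \<in> ?V. cellf n y = d} - {u}) = szf n d - (if ?c = d then 1 else 0)"
        using card_cell[OF n, of d] d u by (simp add: card_Diff_singleton_if)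
      ultimately show ?thesis using True by simp
    next
      case False
      have E: "{y \<in> {y \<in> ?V. y \<noteq> u \<and> cadj n ?c (cellf n y)}. cellf n y = d} = {}"
        using False by auto
      show ?thesis using False by (simp only: E card.empty if_False)
    qed
  qed simp
  also have "\<dots> = Dgf n ?c" by (rule deg_sum[OF n cell_lt[OF u]])
  finally show ?thesis .
qed

definition fr :: "nat \<Rightarrow> nat \<Rightarrow> nat \<Rightarrow> real" where
  "fr n c d = (if cadj n c d then sqrt (real (Dgf n c)^2 + real (Dgf n d)^2) else 0)"

lemma sq2: "sqrt (2 * x^2) = \<bar>x\<bar> * sqrt 2"
  by (simp add: real_sqrt_mult mult.commute)

lemma sq18: "sqrt 18 = 3 * sqrt 2"
proof -
  have "sqrt 18 = sqrt (2 * 3^2)" by simp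
  also have "\<dots> = 3 * sqrt 2" by (subst sq2) simp
  finally show ?thesis .
qed

lemma Qmat_eq:
  assumes n: "n \<ge> 2"
  shows "Qmat n = mat (n+4) (n+4) (\<lambda>(c,d). fr n c d * (real (szf n d) - (if c = d then 1 else 0)))"
proof (rule eq_matI)
  fix c d assume "c < dim_row (mat (n+4) (n+4) (\<lambda>(c,d). fr n c d * (real (szf n d) - (if c = d then 1 else 0))))"
    "d < dim_col (mat (n+4) (n+4) (\<lambda>(c,d). fr n c d * (real (szf n d) - (if c = d then 1 else 0))))"
  hence c: "c < n+4" and d: "d < n+4" by auto
  have r: "real (8*n-1) = 8*real n - 1" "real (6*n-1) = 6*real n - 1" "real (4*n-1) = 4*real n - 1"
    "real (4*n-2) = 4*real n - 2" using n by (auto simp: of_nat_diff)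
  have pos: "4*real n - 1 \<ge> 0" using n by simp
  have cc: "c = 0 \<or> c = 1 \<or> c = 2 \<or> (3 \<le> c \<and> c \<le> n+2) \<or> c = n+3" using c by linarith
  have dd: "d = 0 \<or> d = 1 \<or> d = 2 \<or> (3 \<le> d \<and> d \<le> n+2) \<or> d = n+3" using d by linarith
  show "Qmat n $$ (c,d) = mat (n+4) (n+4) (\<lambda>(c,d). fr n c d * (real (szf n d) - (if c = d then 1 else 0))) $$ (c,d)"
    using cc dd c d n
    by (elim disjE conjE) (simp_all add: Qmat_def Let_def fr_def Dgf_def szf_def cadj_def r sq2 sq18 pos add.commute)
qed (auto simp: Qmat_def Let_def)

lemma mset_const_range:
  assumes "\<And>c. c \<in> {a..<b} \<Longrightarrow> g c = x"
  shows "mset (map g [a..<b]) = replicate_mset (b - a) x"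
proof -
  have "map g [a..<b] = map (\<lambda>_. x) [a..<b]"
    using assms by (intro map_cong) auto
  also have "\<dots> = replicate (b - a) x" by (simp add: map_replicate_const)
  finally have "map g [a..<b] = replicate (b - a) x" .
  thus ?thesis by simp
qed

lemma upt_split3: "i \<le> j \<Longrightarrow> j \<le> k \<Longrightarrow> [i..<k] = [i..<j] @ [j..<k]"
  using upt_add_eq_append[of i j "k-j"] by simp

lemma proots_lin_prod:
  fixes h :: "nat \<Rightarrow> complex"
  shows "proots (\<Prod>c\<leftarrow>xs. [: h c, 1 :]) = mset (map (\<lambda>c. - h c) (xs :: nat list)) "
proof (induction xs)
  case Nil
  then show ?case by simp
next
  case (Cons a xs)
  have nz: "(\<Prod>c\<leftarrow>xs. [: h c, 1 :]) \<noteq> (0 :: complex poly)" by (auto simp: prod_list_zero_iff)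
  have "proots (\<Prod>c\<leftarrow>a # xs. [: h c, 1 :]) = proots ([: h a, 1 :] * (\<Prod>c\<leftarrow>xs. [: h c, 1 :]))" by simp
  also have "\<dots> = proots [: h a, 1 :] + proots (\<Prod>c\<leftarrow>xs. [: h c, 1 :])"
    by (rule proots_mult) (use nz in auto)
  finally show ?case using Cons by simp
qed

theorem theorem5p4:
  fixes n :: nat and vs :: "(nat \<times> nat) list"
  assumes "n \<ge> 2"
    and "distinct vs" and "set vs = carrier (SD n)"
  shows "spectrum_mset (sombor_matrix vs (enhanced_power_adj (SD n))) =
           replicate_mset (4*n - 3) (complex_of_real (- (4*real n - 1) * sqrt 2))
         + replicate_mset (2*n - 1) 0
         + replicate_mset n (complex_of_real (- 3 * sqrt 2))
         + spectrum_mset (Qmat n)"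
proof -
  note n = assms(1) and dist = assms(2) and V = assms(3)
  let ?E = "enhanced_power_adj (SD n)"
  define fc where "fc c d = complex_of_real (fr n c d)" for c d
  define N where "N = length vs"
  have N8: "N = 8*n"
  proof -
    have "N = card (set vs)" using dist by (simp add: N_def distinct_card)
    also have "\<dots> = 8*n" unfolding V SD_carrier by (simp add: card_cartesian_product)
    finally show ?thesis .
  qed
  have vsV: "vs ! i \<in> carrier (SD n)" if "i < N" for i using that V N_def by (metis nth_mem)
  have MS: "map_mat complex_of_real (sombor_matrix vs ?E) =
      mat N N (\<lambda>(i,j). (\<lambda>u v. if u \<noteq> v then fc (cellf n u) (cellf n v) else 0) (vs!i) (vs!j))"
  proof (rule eq_matI)
    fix i j assume "i < dim_row (mat N N (\<lambda>(i,j). (\<lambda>u v. if u \<noteq> v then fc (cellf n u) (cellf n v) else 0) (vs!i) (vs!j)))"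
      "j < dim_col (mat N N (\<lambda>(i,j). (\<lambda>u v. if u \<noteq> v then fc (cellf n u) (cellf n v) else 0) (vs!i) (vs!j)))"
    hence i: "i < N" and j: "j < N" by auto
    show "map_mat complex_of_real (sombor_matrix vs ?E) $$ (i,j) =
      mat N N (\<lambda>(i,j). (\<lambda>u v. if u \<noteq> v then fc (cellf n u) (cellf n v) else 0) (vs!i) (vs!j)) $$ (i,j)"
      using i j vsV[OF i] vsV[OF j] adj_iff[OF n, of "vs!i" "vs!j"]
        deg_formula[OF n V vsV[OF i]] deg_formula[OF n V vsV[OF j]]
      by (simp add: sombor_matrix_def N_def fc_def fr_def)
  qed (auto simp: sombor_matrix_def N_def)
  have MQ: "map_mat complex_of_real (Qmat n) =
      mat (n+4) (n+4) (\<lambda>(c,d). fc c d * (of_nat (card {v \<in> set vs. cellf n v = d}) - (if c = d then 1 else 0)))"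
  proof (rule eq_matI)
    fix c d assume "c < dim_row (mat (n+4) (n+4) (\<lambda>(c,d). fc c d * (of_nat (card {v \<in> set vs. cellf n v = d}) - (if c = d then 1 else (0::complex)))))"
      "d < dim_col (mat (n+4) (n+4) (\<lambda>(c,d). fc c d * (of_nat (card {v \<in> set vs. cellf n v = d}) - (if c = d then 1 else (0::complex)))))"
    hence c: "c < n+4" and d: "d < n+4" by auto
    show "map_mat complex_of_real (Qmat n) $$ (c,d) =
      mat (n+4) (n+4) (\<lambda>(c,d). fc c d * (of_nat (card {v \<in> set vs. cellf n v = d}) - (if c = d then 1 else 0))) $$ (c,d)"
      unfolding Qmat_eq[OF n] using c d card_cell[OF n d] V by (simp add: fc_def)
  qed (auto simp: Qmat_eq[OF n])
  have cp: "char_poly (mat N N (\<lambda>(i,j). (\<lambda>u v. if u \<noteq> v then fc (cellf n u) (cellf n v) else 0) (vs!i) (vs!j))) =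
     char_poly (mat (n+4) (n+4) (\<lambda>(c,d). fc c d * (of_nat (card {v \<in> set vs. cellf n v = d}) - (if c = d then 1 else 0))))
     * (\<Prod>c\<leftarrow>[n+4..<N]. [: fc (cellf n (wsf n c)) (cellf n (wsf n c)), 1 :])"
    by (rule abstract_cp[where vs = vs and N = N and K = "n+4" and cell = "cellf n" and ws = "wsf n" and f = fc])
      (use dist N8 n V cell_lt ws_carrier[OF n] ws_inj[OF n] cell_ws_first[OF n] in \<open>auto simp: N_def\<close>)
  define Cq where "Cq = char_poly (map_mat complex_of_real (Qmat n))"
  define Pr where "Pr = (\<Prod>c\<leftarrow>[n+4..<N]. [: fc (cellf n (wsf n c)) (cellf n (wsf n c)), 1 :])"
  have "spectrum_mset (sombor_matrix vs ?E) = proots (Cq * Pr)"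
    unfolding spectrum_mset_def MS cp Cq_def Pr_def MQ ..
  also have "\<dots> = proots Cq + proots Pr"
  proof (rule proots_mult)
    have "map_mat complex_of_real (Qmat n) \<in> carrier_mat (n+4) (n+4)" by (simp add: Qmat_def Let_def)
    from degree_monic_char_poly[OF this] show "Cq \<noteq> 0" unfolding Cq_def by auto
    show "Pr \<noteq> 0" unfolding Pr_def by (auto simp: prod_list_zero_iff)
  qed
  also have "proots Pr = mset (map (\<lambda>c. - fc (cellf n (wsf n c)) (cellf n (wsf n c))) [n+4..<N])"
    unfolding Pr_def by (rule proots_lin_prod)
  also have "[n+4..<N] = [n+4..<5*n+1] @ [5*n+1..<6*n+1] @ [6*n+1..<8*n]"
  proof -
    have "[n+4..<8*n] = [n+4..<5*n+1] @ [5*n+1..<8*n]" using n by (intro upt_split3) auto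
    moreover have "[5*n+1..<8*n] = [5*n+1..<6*n+1] @ [6*n+1..<8*n]" using n by (intro upt_split3) auto
    ultimately show ?thesis using N8 by simp
  qed
  also have "mset (map (\<lambda>c. - fc (cellf n (wsf n c)) (cellf n (wsf n c))) ([n+4..<5*n+1] @ [5*n+1..<6*n+1] @ [6*n+1..<8*n]))
      = replicate_mset (4*n - 3) (complex_of_real (- (4*real n - 1) * sqrt 2))
        + replicate_mset n (complex_of_real (- 3 * sqrt 2)) + replicate_mset (2*n - 1) 0"
  proof -
    have r4: "real (4*n-1) = 4*real n - 1" using n by (simp add: of_nat_diff)
    have A: "mset (map (\<lambda>c. - fc (cellf n (wsf n c)) (cellf n (wsf n c))) [n+4..<5*n+1]) =
        replicate_mset (4*n - 3) (complex_of_real (- (4*real n - 1) * sqrt 2))"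
    proof -
      have "mset (map (\<lambda>c. - fc (cellf n (wsf n c)) (cellf n (wsf n c))) [n+4..<5*n+1]) =
        replicate_mset (5*n+1 - (n+4)) (complex_of_real (- (4*real n - 1) * sqrt 2))"
        by (rule mset_const_range) (use n r4 in \<open>auto simp: cell_ws_A fc_def fr_def cadj_def Dgf_def sq2 algebra_simps\<close>)
      moreover have "5*n+1 - (n+4) = 4*n - 3" by simp
      ultimately show ?thesis by simp
    qed
    have P: "mset (map (\<lambda>c. - fc (cellf n (wsf n c)) (cellf n (wsf n c))) [5*n+1..<6*n+1]) =
        replicate_mset n (complex_of_real (- 3 * sqrt 2))"
    proof -
      have "mset (map (\<lambda>c. - fc (cellf n (wsf n c)) (cellf n (wsf n c))) [5*n+1..<6*n+1]) =
        replicate_mset (6*n+1 - (5*n+1)) (complex_of_real (- 3 * sqrt 2))"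
        by (rule mset_const_range) (use n in \<open>auto simp: cell_ws_P fc_def fr_def cadj_def Dgf_def sq18\<close>)
      thus ?thesis by simp
    qed
    have L: "mset (map (\<lambda>c. - fc (cellf n (wsf n c)) (cellf n (wsf n c))) [6*n+1..<8*n]) =
        replicate_mset (2*n - 1) 0"
    proof -
      have "mset (map (\<lambda>c. - fc (cellf n (wsf n c)) (cellf n (wsf n c))) [6*n+1..<8*n]) =
        replicate_mset (8*n - (6*n+1)) 0"
        by (rule mset_const_range) (use n in \<open>auto simp: cell_ws_L fc_def fr_def cadj_def\<close>)
      moreover have "8*n - (6*n+1) = 2*n - 1" by simp
      ultimately show ?thesis by simp
    qed
    show ?thesis using A P L by (simp add: add.assoc)
  qed
  finally show ?thesis unfolding Cq_def spectrum_mset_def by (simp add: ac_simps)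
qed

end
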